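(* Let $m,n$ be coprime positive integers and let $(A,B)\in\mathrm{SL}(2,\mathbb{C})^2$ satisfy $A^m=B^n$ (i.e. $(A,B)$ defines a representation $\rho$ of $G_{m,n}=\langle x,y\mid x^m=y^n\rangle$ into $\mathrm{SL}(2,\mathbb{C})$ with $\rho(x)=A$, $\rho(y)=B$). If any of the following holds: (a) $A^m=B^n\neq\pm\mathrm{Id}$; (b) $A=\pm\mathrm{Id}$ or $B=\pm\mathrm{Id}$; (c) $A$ or $B$ is not diagonalizable, then $\rho$ is reducible, i.e. $A$ and $B$ have a common eigenvector. *)

theory Defs
  imports "HOL-Analysis.Analysis"
begin

type_synonym cmat2 = "complex ^ 2 ^ 2"

primrec mat_pow :: "('a::comm_ring_1) ^ 'n ^ 'n \<Rightarrow> nat \<Rightarrow> 'a ^ 'n ^ 'n" where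
  "mat_pow A 0 = mat 1"
| "mat_pow A (Suc k) = A ** mat_pow A k"

definition in_SL2 :: "cmat2 \<Rightarrow> bool" where
  "in_SL2 A \<longleftrightarrow> det A = 1"

definition is_diagonal_mat :: "('a::zero) ^ 'n ^ 'n \<Rightarrow> bool" where
  "is_diagonal_mat D \<longleftrightarrow> (\<forall>i j. i \<noteq> j \<longrightarrow> D $ i $ j = 0)"

definition is_diagonalizable :: "('a::field) ^ 'n ^ 'n \<Rightarrow> bool" where
  "is_diagonalizable A \<longleftrightarrow>
     (\<exists>(P::'a^'n^'n) (Q::'a^'n^'n). P ** Q = mat 1 \<and> Q ** P = mat 1 \<and> is_diagonal_mat (Q ** A ** P))"

definition common_eigenvector :: "('a::field) ^ 'n ^ 'n \<Rightarrow> 'a ^ 'n ^ 'n \<Rightarrow> bool" where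
  "common_eigenvector A B \<longleftrightarrow>
     (\<exists>v lam mu. v \<noteq> 0 \<and> A *v v = lam *s v \<and> B *v v = mu *s v)"

end

theory Submission imports Defs begin
lemmas E = matrix_matrix_mult_def matrix_vector_mult_def mat_def vec_eq_iff forall_2 sum_2 det_2

definition v2 :: "complex \<Rightarrow> complex \<Rightarrow> complex^2" where
  "v2 x y = (\<chi> i. if i = 1 then x else y)"
lemma v2_simps[simp]: "v2 x y $ 1 = x" "v2 x y $ 2 = y"
  by (simp_all add: v2_def)
lemma v2_eq0[simp]: "v2 x y = 0 \<longleftrightarrow> x = 0 \<and> y = 0"
  by (simp add: vec_eq_iff forall_2)

lemma eig_exists:
  fixes M :: cmat2
  shows "\<exists>v l. v \<noteq> 0 \<and> M *v v = l *s v"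
proof -
  define a b c d where "a = M$1$1" "b = M$1$2" "c = M$2$1" "d = M$2$2"
  define s where "s = csqrt ((a+d)^2 - 4*(a*d-b*c))"
  define l where "l = (a+d+s)/2"
  have s2: "s^2 = (a+d)^2 - 4*(a*d-b*c)" unfolding s_def by simp
  have root: "(a-l)*(d-l) - b*c = 0"
  proof -
    have "4*((a-l)*(d-l) - b*c) = s^2 - (a-d)^2 - 4*b*c"
      unfolding l_def by (simp add: field_simps power2_eq_square)
    also have "\<dots> = 0" using s2 by (simp add: algebra_simps power2_eq_square)
    finally show ?thesis by simp
  qed
  show ?thesis
  proof (cases "b \<noteq> 0 \<or> l \<noteq> a")
    case True
    have "M *v v2 b (l-a) = l *s v2 b (l-a)"
      using root by (simp add: E a_b_c_d_def[symmetric]) (simp add: algebra_simps)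
    then show ?thesis using True by (intro exI[of _ "v2 b (l-a)"] exI[of _ l]) auto
  next
    case False
    hence b0: "b = 0" and la: "l = a" by auto
    show ?thesis
    proof (cases "c = 0")
      case True
      have "M *v v2 1 0 = l *s v2 1 0"
        using b0 la True by (simp add: E a_b_c_d_def[symmetric])
      then show ?thesis by (intro exI[of _ "v2 1 0"] exI[of _ l]) auto
    next
      case c: False
      have "M *v v2 (l-d) c = l *s v2 (l-d) c"
        using root b0 la by (simp add: E a_b_c_d_def[symmetric]) (simp add: algebra_simps)
      then show ?thesis using c by (intro exI[of _ "v2 (l-d) c"] exI[of _ l]) auto
    qed
  qed
qed

lemma ker1:
  fixes C :: cmat2 and x y :: "complex^2"
  assumes nC: "C \<noteq> mat l" and hv: "C *v x = l *s x" and hw: "C *v y = l *s y" and v0: "x \<noteq> 0"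
  shows "\<exists>\<alpha>. y = \<alpha> *s x"
proof -
  define p q r s where "p = C$1$1 - l" "q = C$1$2" "r = C$2$1" "s = C$2$2 - l"
  have e: "p*x$1 + q*x$2 = 0" "r*x$1 + s*x$2 = 0" "p*y$1 + q*y$2 = 0" "r*y$1 + s*y$2 = 0"
    using hv hw by (simp_all add: E p_q_r_s_def algebra_simps)
  have nz: "\<not> (p = 0 \<and> q = 0 \<and> r = 0 \<and> s = 0)"
    using nC by (auto simp: E p_q_r_s_def)
  have dl: "x$1*y$2 - x$2*y$1 = 0"
  proof (rule ccontr)
    assume h: "x$1*y$2 - x$2*y$1 \<noteq> 0"
    have "p*(x$1*y$2 - x$2*y$1) = 0" "q*(x$1*y$2 - x$2*y$1) = 0"
         "r*(x$1*y$2 - x$2*y$1) = 0" "s*(x$1*y$2 - x$2*y$1) = 0"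
    proof -
      show "p*(x$1*y$2 - x$2*y$1) = 0"
      proof -
        have "p*(x$1*y$2 - x$2*y$1) = y$2*(p*x$1 + q*x$2) - x$2*(p*y$1 + q*y$2)" by (simp add: algebra_simps)
        then show ?thesis using e by simp
      qed
      show "q*(x$1*y$2 - x$2*y$1) = 0"
      proof -
        have "q*(x$1*y$2 - x$2*y$1) = x$1*(p*y$1 + q*y$2) - y$1*(p*x$1 + q*x$2)" by (simp add: algebra_simps)
        then show ?thesis using e by simp
      qed
      show "r*(x$1*y$2 - x$2*y$1) = 0"
      proof -
        have "r*(x$1*y$2 - x$2*y$1) = y$2*(r*x$1 + s*x$2) - x$2*(r*y$1 + s*y$2)" by (simp add: algebra_simps)
        then show ?thesis using e by simp
      qed
      show "s*(x$1*y$2 - x$2*y$1) = 0"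
      proof -
        have "s*(x$1*y$2 - x$2*y$1) = x$1*(r*y$1 + s*y$2) - y$1*(r*x$1 + s*x$2)" by (simp add: algebra_simps)
        then show ?thesis using e by simp
      qed
    qed
    with h nz show False by simp
  qed
  show ?thesis
  proof (cases "x$1 = 0")
    case False
    have "y = (y$1/x$1) *s x" using False dl
      by (simp add: vec_eq_iff forall_2 field_simps)
    then show ?thesis by blast
  next
    case True
    hence "x$2 \<noteq> 0" using v0 by (auto simp: vec_eq_iff forall_2)
    have "y = (y$2/x$2) *s x" using True dl \<open>x$2 \<noteq> 0\<close>
      by (simp add: vec_eq_iff forall_2 field_simps)
    then show ?thesis by blast
  qed
qed

lemma mv_smult: "(A::cmat2) *v (l *s v) = l *s (A *v v)"
  by (simp add: E algebra_simps)

lemma key: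
  fixes A B C :: cmat2
  assumes nsc: "\<And>\<mu>. C \<noteq> mat \<mu>" and cA: "A ** C = C ** A" and cB: "B ** C = C ** B"
  shows "common_eigenvector A B"
proof -
  obtain v l where v0: "v \<noteq> 0" and hv: "C *v v = l *s v" using eig_exists by blast
  have "C *v (A *v v) = l *s (A *v v)"
    by (metis cA hv matrix_vector_mul_assoc mv_smult)
  then obtain a where a: "A *v v = a *s v" using ker1[OF nsc hv _ v0] by blast
  have "C *v (B *v v) = l *s (B *v v)"
    by (metis cB hv matrix_vector_mul_assoc mv_smult)
  then obtain b where b: "B *v v = b *s v" using ker1[OF nsc hv _ v0] by blast
  show ?thesis unfolding common_eigenvector_def using v0 a b by blast
qed

lemma pow_comm: "A ** mat_pow A k = mat_pow A k ** A"
  by (induction k) (simp_all add: matrix_mul_assoc)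

lemma det_pow: "det (mat_pow (A::cmat2) k) = det A ^ k"
  by (induction k) (simp_all add: det_mul)


definition m2 :: "complex \<Rightarrow> complex \<Rightarrow> complex \<Rightarrow> complex \<Rightarrow> cmat2" where
  "m2 a b c d = (\<chi> i j. if i = 1 then (if j = 1 then a else b) else (if j = 1 then c else d))"
lemma m2_simps[simp]: "m2 a b c d $ 1 $ 1 = a" "m2 a b c d $ 1 $ 2 = b" "m2 a b c d $ 2 $ 1 = c" "m2 a b c d $ 2 $ 2 = d"
  by (simp_all add: m2_def)

lemma diag_from_eigs:
  fixes M :: cmat2 and x y :: "complex^2"
  assumes hx: "M *v x = l *s x" and hy: "M *v y = u *s y" and dl: "x$1*y$2 - x$2*y$1 \<noteq> 0"
  shows "is_diagonalizable M"
proof -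
  define \<delta> where "\<delta> = x$1*y$2 - x$2*y$1"
  define P where "P = m2 (x$1) (y$1) (x$2) (y$2)"
  define Q where "Q = m2 (y$2/\<delta>) (-y$1/\<delta>) (-x$2/\<delta>) (x$1/\<delta>)"
  have d0: "\<delta> \<noteq> 0" using dl by (simp add: \<delta>_def)
  have PQ: "P ** Q = mat 1" using d0 by (simp add: E P_def Q_def field_simps) (simp add: \<delta>_def algebra_simps)
  have QP: "Q ** P = mat 1" using d0 by (simp add: E P_def Q_def field_simps) (simp add: \<delta>_def algebra_simps)
  have hx': "M$1$1*x$1 + M$1$2*x$2 = l*x$1" "M$2$1*x$1 + M$2$2*x$2 = l*x$2" using hx by (simp_all add: E)
  have hy': "M$1$1*y$1 + M$1$2*y$2 = u*y$1" "M$2$1*y$1 + M$2$2*y$2 = u*y$2" using hy by (simp_all add: E)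
  have MP: "M ** P = P ** m2 l 0 0 u"
    using hx' hy' by (simp add: E P_def algebra_simps)
  have "Q ** M ** P = m2 l 0 0 u"
    by (metis MP QP matrix_mul_assoc matrix_mul_lid)
  hence "is_diagonal_mat (Q ** M ** P)"
    by (simp add: is_diagonal_mat_def forall_2)
  then show ?thesis unfolding is_diagonalizable_def using PQ QP by blast
qed


lemma eigv1:
  fixes M :: cmat2
  assumes "(M$1$1-l)*(M$2$2-l) - M$1$2*M$2$1 = 0"
  shows "M *v v2 (M$1$2) (l - M$1$1) = l *s v2 (M$1$2) (l - M$1$1)"
  using assms by (simp add: E) (simp add: algebra_simps)

lemma eigv2:
  fixes M :: cmat2
  assumes "(M$1$1-l)*(M$2$2-l) - M$1$2*M$2$1 = 0"
  shows "M *v v2 (l - M$2$2) (M$2$1) = l *s v2 (l - M$2$2) (M$2$1)"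
  using assms by (simp add: E) (simp add: algebra_simps)

lemma diag_bc0:
  fixes M :: cmat2
  assumes "M$1$2 = 0" "M$2$1 = 0"
  shows "is_diagonalizable M"
  unfolding is_diagonalizable_def is_diagonal_mat_def
  by (rule exI[of _ "mat 1"], rule exI[of _ "mat 1"]) (use assms in \<open>auto simp: forall_2\<close>)

lemma distinct_diag:
  fixes M :: cmat2
  assumes D: "(M$1$1 - M$2$2)^2 + 4*M$1$2*M$2$1 \<noteq> 0"
  shows "is_diagonalizable M"
proof -
  define a b c d where "a = M$1$1" "b = M$1$2" "c = M$2$1" "d = M$2$2"
  define s where "s = csqrt ((a-d)^2 + 4*b*c)"
  have s2: "s^2 = (a-d)^2 + 4*b*c" unfolding s_def by simp
  have s0: "s \<noteq> 0" using D s2 by (auto simp: a_b_c_d_def)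
  define l1 where "l1 = (a+d+s)/2"
  define l2 where "l2 = (a+d-s)/2"
  have r1: "(a-l1)*(d-l1) - b*c = 0"
  proof -
    have "4*((a-l1)*(d-l1) - b*c) = s^2 - (a-d)^2 - 4*b*c"
      unfolding l1_def by (simp add: field_simps power2_eq_square)
    also have "\<dots> = 0" using s2 by simp
    finally show ?thesis by simp
  qed
  have r2: "(a-l2)*(d-l2) - b*c = 0"
  proof -
    have "4*((a-l2)*(d-l2) - b*c) = s^2 - (a-d)^2 - 4*b*c"
      unfolding l2_def by (simp add: field_simps power2_eq_square)
    also have "\<dots> = 0" using s2 by simp
    finally show ?thesis by simp
  qed
  have l12: "l2 - l1 = - s" unfolding l1_def l2_def by (simp add: field_simps)
  show ?thesis
  proof (cases "b = 0")
    case False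
    have "b * (l2 - a) - (l1 - a) * b \<noteq> 0"
    proof -
      have "b * (l2 - a) - (l1 - a) * b = b * (l2 - l1)" by (simp add: algebra_simps)
      then show ?thesis using False s0 l12 by simp
    qed
    then show ?thesis
      using diag_from_eigs[OF eigv1[of M l1] eigv1[of M l2]] r1 r2
      by (simp add: a_b_c_d_def)
  next
    case b0: True
    show ?thesis
    proof (cases "c = 0")
      case True
      then show ?thesis using b0 diag_bc0 by (simp add: a_b_c_d_def)
    next
      case False
      have "(l1 - d) * c - c * (l2 - d) \<noteq> 0"
      proof -
        have "(l1 - d) * c - c * (l2 - d) = - c * (l2 - l1)" by (simp add: algebra_simps)
        then show ?thesis using False s0 l12 by simp
      qed
      then show ?thesis
        using diag_from_eigs[OF eigv2[of M l1] eigv2[of M l2]] r1 r2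
        by (simp add: a_b_c_d_def)
    qed
  qed
qed


lemma pow_formula:
  fixes A :: cmat2
  assumes a: "A$1$1 = l + p" and d: "A$2$2 = l - p" and nil: "p^2 + A$1$2*A$2$1 = 0"
  shows "l * mat_pow A k $1$1 = l^(k+1) + of_nat k * l^k * p \<and>
         l * mat_pow A k $1$2 = of_nat k * l^k * A$1$2 \<and>
         l * mat_pow A k $2$1 = of_nat k * l^k * A$2$1 \<and>
         l * mat_pow A k $2$2 = l^(k+1) - of_nat k * l^k * p"
proof (induction k)
  case 0
  then show ?case by (simp add: mat_def)
next
  case (Suc k)
  define q r where "q = A$1$2" "r = A$2$1"
  define X where "X = mat_pow A k"
  have IH: "l * X$1$1 = l^(k+1) + of_nat k * l^k * p" "l * X$1$2 = of_nat k * l^k * q"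
     "l * X$2$1 = of_nat k * l^k * r" "l * X$2$2 = l^(k+1) - of_nat k * l^k * p"
    using Suc.IH by (simp_all add: X_def q_r_def)
  have nil': "p*p = - (q*r)" using nil by (simp add: q_r_def power2_eq_square add_eq_0_iff)
  have nil2: "\<And>z. p * (p * z) + q * (r * z) = 0"
  proof -
    fix z
    have "p * (p * z) + q * (r * z) = (p*p + q*r) * z" by (simp add: algebra_simps)
    then show "p * (p * z) + q * (r * z) = 0" using nil' by simp
  qed
  have e: "mat_pow A (Suc k) = A ** X" by (simp add: X_def)
  have E11: "l * (A ** X)$1$1 = (l+p)*(l*X$1$1) + q*(l*X$2$1)"
    by (simp add: E q_r_def a algebra_simps)
  have E12: "l * (A ** X)$1$2 = (l+p)*(l*X$1$2) + q*(l*X$2$2)"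
    by (simp add: E q_r_def a algebra_simps)
  have E21: "l * (A ** X)$2$1 = r*(l*X$1$1) + (l-p)*(l*X$2$1)"
    by (simp add: E q_r_def d algebra_simps)
  have E22: "l * (A ** X)$2$2 = r*(l*X$1$2) + (l-p)*(l*X$2$2)"
    by (simp add: E q_r_def d algebra_simps)
  show ?case unfolding e q_r_def[symmetric] E11 E12 E21 E22 IH
    by (simp add: algebra_simps nil2)
qed


lemma scalar_pow_diag:
  fixes A :: cmat2
  assumes dA: "det A = 1" and m: "m > 0" and pw: "mat_pow A m = mat \<mu>"
  shows "is_diagonalizable A"
proof (cases "(A$1$1 - A$2$2)^2 + 4*A$1$2*A$2$1 = 0")
  case False
  then show ?thesis by (rule distinct_diag)
next
  case True
  define a b c d where "a = A$1$1" "b = A$1$2" "c = A$2$1" "d = A$2$2"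
  define l p where "l = (a+d)/2" "p = (a-d)/2"
  have D0: "(a-d)^2 + 4*b*c = 0" using True by (simp add: a_b_c_d_def)
  have det1: "a*d - b*c = 1" using dA by (simp add: det_2 a_b_c_d_def)
  have nil: "p^2 + b*c = 0"
  proof -
    have "4*(p^2 + b*c) = (a-d)^2 + 4*b*c" by (simp add: l_p_def field_simps power2_eq_square)
    also have "\<dots> = 0" using D0 .
    finally have "4*(p^2 + b*c) = 0" .
    then show ?thesis by (simp only: mult_eq_0_iff) simp
  qed
  have l2: "l^2 = 1"
  proof -
    have "4*l^2 = ((a-d)^2 + 4*b*c) + 4*(a*d - b*c)" by (simp add: l_p_def field_simps power2_eq_square)
    also have "\<dots> = 4" using D0 det1 by simp
    finally have "4*l^2 = 4*1" by simp
    then show ?thesis by (simp only: mult_cancel_left) simp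
  qed
  hence l0: "l \<noteq> 0" by auto
  have h1: "A$1$1 = l + p" unfolding l_p_def a_b_c_d_def by (simp add: field_simps)
  have h2: "A$2$2 = l - p" unfolding l_p_def a_b_c_d_def by (simp add: field_simps)
  have h3: "p^2 + A$1$2*A$2$1 = 0" using nil by (simp add: a_b_c_d_def)
  have F: "l * mat_pow A m $1$2 = of_nat m * l^m * b \<and> l * mat_pow A m $2$1 = of_nat m * l^m * c"
    using pow_formula[OF h1 h2 h3, of m] unfolding a_b_c_d_def by blast
  have "of_nat m * l^m * b = 0" "of_nat m * l^m * c = 0" using F pw by (simp_all add: mat_def)
  hence "b = 0" "c = 0" using l0 m by auto
  then show ?thesis using diag_bc0 by (simp add: a_b_c_d_def)
qed

lemma neg_mat1: "- mat 1 = (mat (-1)::cmat2)" by (simp add: E)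
lemma neg_mat1_mv: "(- mat 1::cmat2) *v v = (-1) *s v" by (simp add: E)

theorem lemma2p2:
  fixes m n :: nat and A B :: cmat2
  assumes "m > 0" and "n > 0" and "coprime m n"
    and "in_SL2 A" and "in_SL2 B"
    and "mat_pow A m = mat_pow B n"
    and "(mat_pow A m \<noteq> mat 1 \<and> mat_pow A m \<noteq> - mat 1)
         \<or> (A = mat 1 \<or> A = - mat 1 \<or> B = mat 1 \<or> B = - mat 1)
         \<or> (\<not> is_diagonalizable A \<or> \<not> is_diagonalizable B)"
  shows "common_eigenvector A B"
proof (cases "\<exists>\<mu>. mat_pow A m = mat \<mu>")
  case False
  show ?thesis
  proof (rule key[of "mat_pow A m"])
    show "\<And>\<mu>. mat_pow A m \<noteq> mat \<mu>" using False by blast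
    show "A ** mat_pow A m = mat_pow A m ** A" by (rule pow_comm)
    show "B ** mat_pow A m = mat_pow A m ** B" unfolding assms(6) by (rule pow_comm)
  qed
next
  case True
  then obtain \<mu> where mu: "mat_pow A m = mat \<mu>" by blast
  have "det (mat_pow A m) = 1" using assms(4) by (simp add: det_pow in_SL2_def)
  hence "\<mu> * \<mu> = 1" using mu by (simp add: det_2 mat_def)
  then have "\<mu> = 1 \<or> \<mu> = -1"
  proof -
    assume "\<mu> * \<mu> = 1"
    hence "(\<mu> - 1) * (\<mu> + 1) = 0" by (simp add: algebra_simps)
    hence "\<mu> - 1 = 0 \<or> \<mu> + 1 = 0" by simp
    thus ?thesis by (auto simp: eq_neg_iff_add_eq_0)
  qed
  hence sc: "mat_pow A m = mat 1 \<or> mat_pow A m = - mat 1" using mu by (auto simp: neg_mat1)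
  have dA: "is_diagonalizable A"
    using scalar_pow_diag[OF _ assms(1) mu] assms(4) by (simp add: in_SL2_def)
  have dB: "is_diagonalizable B"
    using scalar_pow_diag[OF _ assms(2), of B \<mu>] assms(5,6) mu by (simp add: in_SL2_def)
  have b: "A = mat 1 \<or> A = - mat 1 \<or> B = mat 1 \<or> B = - mat 1"
    using assms(7) sc dA dB by blast
  show ?thesis
  proof (cases "A = mat 1 \<or> A = - mat 1")
    case True
    obtain v l where "v \<noteq> 0" "B *v v = l *s v" using eig_exists by blast
    moreover have "\<exists>a. A *v v = a *s v"
      using True by (metis neg_mat1_mv matrix_vector_mul_lid vector_smult_lid)
    ultimately show ?thesis unfolding common_eigenvector_def by blast
  next
    case False
    hence Bs: "B = mat 1 \<or> B = - mat 1" using b by blast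
    obtain v l where "v \<noteq> 0" "A *v v = l *s v" using eig_exists by blast
    moreover have "\<exists>a. B *v v = a *s v"
      using Bs by (metis neg_mat1_mv matrix_vector_mul_lid vector_smult_lid)
    ultimately show ?thesis unfolding common_eigenvector_def by blast
  qed
qed

end
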